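(* Let $r\ge1$, $\mathbf{M}=(M_0,\dots,M_{e-1})\in\mathbb{Z}_{\ge0}^e$ and $(\boldsymbol\lambda,\mathbf{s}),(\boldsymbol\mu,\mathbf{s}')\in\mathcal{A}_e^r$. Then $(\boldsymbol\lambda,\mathbf{s})\approx_e(\boldsymbol\mu,\mathbf{s}')$ if and only if $\mathrm{Str}((\boldsymbol\lambda,\mathbf{s});\mathbf{M})\approx_e\mathrm{Str}((\boldsymbol\mu,\mathbf{s}');\mathbf{M})$.
   Context: Fix an integer $e\ge 2$. A partition is a weakly decreasing sequence $\lambda=(\lambda_1,\lambda_2,\dots)$ of non-negative integers with finite sum $|\lambda|$; $\Lambda$ denotes the set of partitions and $\Lambda^{(m)}$ the set of $m$-multipartitions, i.e. $m$-tuples $\boldsymbol\lambda=(\lambda^{(1)},\dots,\lambda^{(m)})$ of partitions, with $|\boldsymbol\lambda|=\sum_k|\lambda^{(k)}|$. A $\beta$-set is a subset $B\subseteq\mathbb{Z}$ containing all sufficiently small integers and no sufficiently large ones. For $\lambda\in\Lambda$ and $s\in\mathbb{Z}$ set $B_s(\lambda)=\{\lambda_i-i+s : i\ge 1\}$; every $\beta$-set equals $B_s(\lambda)$ for a unique pair $(\lambda,s)$. Let $\mathcal{A}_e=\Lambda\times\mathbb{Z}$ (abacus configurations with $e$ runners) and $\mathcal{A}_e^m=\Lambda^{(m)}\times\mathbb{Z}^m$, where $(\boldsymbol\lambda,\mathbf{s})$ is identified with the $m$-tuple of $\beta$-sets $(B_{s_1}(\lambda^{(1)}),\dots,B_{s_m}(\lambda^{(m)}))$.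 Blocks: for $(\boldsymbol\lambda,\mathbf{s})\in\mathcal{A}_e^m$, its $e$-residue multiset is the multiset of the values $s_k+y-x \bmod e$ over all nodes $(x,y,k)$ with $x\ge1$, $1\le y\le\lambda^{(k)}_x$, $1\le k\le m$. Define $(\boldsymbol\lambda,\mathbf{s})\approx_e(\boldsymbol\mu,\mathbf{s}')$ iff $\mathbf{s}=\mathbf{s}'$, $|\boldsymbol\lambda|=|\boldsymbol\mu|$ and the $e$-residue multisets coincide. Its equivalence classes are called blocks. The map $\eta$: for $(\lambda,s)\in\mathcal{A}_e$ with $B=B_s(\lambda)$ and $0\le i<e$, the set $C_i=\{(b-i)/e : b\in B,\ b\equiv i \bmod e\}$ is a $\beta$-set, so $C_i=B_{t_i}(\rho_i)$ for a unique $(\rho_i,t_i)\in\Lambda\times\mathbb{Z}$; set $\eta(\lambda,s)=((\rho_0,\dots,\rho_{e-1}),(t_0,\dots,t_{e-1}))$; $\eta$ is a bijection $\mathcal{A}_e\to\Lambda^{(e)}\times\mathbb{Z}^e$. Stretching: for $\mathbf{M}\in\mathbb{Z}^e$ and $(\lambda,s)\in\mathcal{A}_e$ with $\eta(\lambda,s)=(\boldsymbol\rho,(t_0,\dots,t_{e-1}))$, $\mathrm{Str}((\lambda,s);\mathbf{M})$ is the unique element of $\mathcal{A}_e$ whose image under $\eta$ is $(\boldsymbol\rho,(t_0+M_0,\dots,t_{e-1}+M_{e-1}))$. For $(\boldsymbol\lambda,\mathbf{s})\in\mathcal{A}_e^r$, $\mathrm{Str}((\boldsymbol\lambda,\mathbf{s});\mathbf{M})$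 is obtained by applying this to each component $(\lambda^{(k)},s_k)$; for a subset $\mathcal{R}$, $\mathrm{Str}(\mathcal{R};\mathbf{M})$ is its image. *)

theory Defs
  imports Main "HOL-Library.Multiset"
begin

text \<open>A partition lambda = (lambda_1, lambda_2, ...) is represented 0-indexed as a function
  lam :: nat => nat with lam i = lambda_(i+1).\<close>

definition is_partition :: "(nat \<Rightarrow> nat) \<Rightarrow> bool" where
  "is_partition lam \<longleftrightarrow> (\<forall>i. lam (Suc i) \<le> lam i) \<and> finite {i. lam i \<noteq> 0}"

definition part_size :: "(nat \<Rightarrow> nat) \<Rightarrow> nat" where
  "part_size lam = (\<Sum>i\<in>{i. lam i \<noteq> 0}. lam i)"

definition beta_set :: "int \<Rightarrow> (nat \<Rightarrow> nat) \<Rightarrow> int set" where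
  "beta_set s lam = {int (lam (i - 1)) - int i + s | i. i \<ge> 1}"

definition is_beta_set :: "int set \<Rightarrow> bool" where
  "is_beta_set B \<longleftrightarrow> (\<exists>n. \<forall>b\<le>n. b \<in> B) \<and> (\<exists>n. \<forall>b\<ge>n. b \<notin> B)"

type_synonym config = "(nat \<Rightarrow> nat) \<times> int"

definition config_of :: "int set \<Rightarrow> config" where
  "config_of B = (THE c. is_partition (fst c) \<and> beta_set (snd c) (fst c) = B)"

definition eta :: "nat \<Rightarrow> config \<Rightarrow> config list" where
  "eta e c = map (\<lambda>i. config_of
      {(b - int i) div int e | b. b \<in> beta_set (snd c) (fst c) \<and> b mod int e = int i}) [0..<e]"

definition Str :: "nat \<Rightarrow> config \<Rightarrow> int list \<Rightarrow> config" where
  "Str e c M = (THE c'. is_partition (fst c') \<and>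
      eta e c' = map (\<lambda>i. (fst (eta e c ! i), snd (eta e c ! i) + M ! i)) [0..<e])"

definition is_multiconfig :: "config list \<Rightarrow> bool" where
  "is_multiconfig cs \<longleftrightarrow> (\<forall>c\<in>set cs. is_partition (fst c))"

definition Str_multi :: "nat \<Rightarrow> config list \<Rightarrow> int list \<Rightarrow> config list" where
  "Str_multi e cs M = map (\<lambda>c. Str e c M) cs"

definition multi_size :: "config list \<Rightarrow> nat" where
  "multi_size cs = (\<Sum>c\<leftarrow>cs. part_size (fst c))"

definition nodes :: "config list \<Rightarrow> (nat \<times> nat \<times> nat) set" where
  "nodes cs = {(x, y, k). 1 \<le> x \<and> 1 \<le> y \<and> 1 \<le> k \<and> k \<le> length cs
       \<and> y \<le> fst (cs ! (k - 1)) (x - 1)}"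

definition residue_mset :: "nat \<Rightarrow> config list \<Rightarrow> int multiset" where
  "residue_mset e cs = image_mset
     (\<lambda>(x, y, k). (snd (cs ! (k - 1)) + int y - int x) mod int e) (mset_set (nodes cs))"

definition block_equiv :: "nat \<Rightarrow> config list \<Rightarrow> config list \<Rightarrow> bool" where
  "block_equiv e cs ds \<longleftrightarrow> map snd cs = map snd ds \<and> multi_size cs = multi_size ds
      \<and> residue_mset e cs = residue_mset e ds"

end

theory Submission
  imports Defs
begin

definition bb :: "int \<Rightarrow> (nat \<Rightarrow> nat) \<Rightarrow> nat \<Rightarrow> int" where
  "bb s lam i = int (lam i) - int i - 1 + s"

lemma beta_set_range: "beta_set s lam = range (bb s lam)"
proof
  show "beta_set s lam \<subseteq> range (bb s lam)"
  proof
    fix b assume "b \<in> beta_set s lam"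
    then obtain i where "i \<ge> 1" "b = int (lam (i - 1)) - int i + s" unfolding beta_set_def by auto
    then have "b = bb s lam (i - 1)" unfolding bb_def by auto
    then show "b \<in> range (bb s lam)" by auto
  qed
next
  show "range (bb s lam) \<subseteq> beta_set s lam"
  proof
    fix b assume "b \<in> range (bb s lam)"
    then obtain x where "b = bb s lam x" by auto
    then have "b = int (lam (x + 1 - 1)) - int (x+1) + s" unfolding bb_def by auto
    moreover have "(1::nat) \<le> x + 1" by simp
    ultimately show "b \<in> beta_set s lam" unfolding beta_set_def by blast
  qed
qed

lemma part_antimono: "is_partition lam \<Longrightarrow> i \<le> j \<Longrightarrow> lam j \<le> lam i"
  unfolding is_partition_def by (metis lift_Suc_antimono_le)

lemma part_zero: "is_partition lam \<Longrightarrow> \<exists>n. \<forall>i\<ge>n. lam i = 0"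
proof -
  assume p: "is_partition lam"
  then have f: "finite {i. lam i \<noteq> 0}" unfolding is_partition_def by auto
  then obtain n where "\<forall>i\<in>{i. lam i \<noteq> 0}. i < n"
    using finite_nat_set_iff_bounded by blast
  then show ?thesis by (metis leD mem_Collect_eq)
qed

lemma bb_strict: "is_partition lam \<Longrightarrow> i < j \<Longrightarrow> bb s lam j < bb s lam i"
  unfolding bb_def using part_antimono[of lam i j] by auto

lemma bb_less_iff: "is_partition lam \<Longrightarrow> bb s lam j < bb s lam i \<longleftrightarrow> i < j"
  by (metis bb_strict less_asym linorder_neqE_nat)

lemma bb_inj: "is_partition lam \<Longrightarrow> inj (bb s lam)"
  by (metis bb_strict injI less_irrefl linorder_neqE_nat)

lemma bb_tail: "\<forall>i\<ge>n. lam i = 0 \<Longrightarrow> i \<ge> n \<Longrightarrow> bb s lam i = s - int i - 1"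
  unfolding bb_def by auto

lemma bb_ge: "bb s lam i \<ge> s - int i - 1"
  unfolding bb_def by auto

lemma below_in: "\<forall>i\<ge>n. lam i = 0 \<Longrightarrow> a < s - int n \<Longrightarrow> a \<in> range (bb s lam)"
proof -
  assume z: "\<forall>i\<ge>n. lam i = 0" and a: "a < s - int n"
  define i where "i = nat (s - a - 1)"
  have "i \<ge> n" using a unfolding i_def by auto
  then have "bb s lam i = a" using bb_tail[OF z] a unfolding i_def by auto
  then show ?thesis by (metis rangeI)
qed

lemma gt_image: assumes "is_partition lam"
  shows "{c \<in> range (bb s lam). bb s lam i < c} = bb s lam ` {..<i}"
  using bb_less_iff[OF assms] by auto

lemma card_gt: assumes "is_partition lam"
  shows "card {c \<in> range (bb s lam). bb s lam i < c} = i"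
  unfolding gt_image[OF assms] by (simp add: card_image inj_on_subset[OF bb_inj[OF assms]])

lemma beta_unique:
  assumes p: "is_partition lam" "is_partition lam'" and eq: "beta_set s lam = beta_set s' lam'"
  shows "lam = lam' \<and> s = s'"
proof -
  have R: "range (bb s lam) = range (bb s' lam')" using eq by (simp add: beta_set_range)
  have bi: "bb s lam i = bb s' lam' i" for i
  proof -
    obtain k where k: "bb s' lam' i = bb s lam k" using R by (metis rangeE rangeI)
    have "card {c \<in> range (bb s lam). bb s lam k < c} = k" by (rule card_gt[OF p(1)])
    moreover have "card {c \<in> range (bb s' lam'). bb s' lam' i < c} = i" by (rule card_gt[OF p(2)])
    ultimately have "k = i" using R k by simp
    then show ?thesis using k by simp
  qed
  obtain n where n: "\<forall>i\<ge>n. lam i = 0" using part_zero[OF p(1)] by blast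
  obtain n' where n': "\<forall>i\<ge>n'. lam' i = 0" using part_zero[OF p(2)] by blast
  have "s = s'" using bi[of "max n n'"] bb_tail[OF n, of "max n n'" s] bb_tail[OF n', of "max n n'" s'] by simp
  then have "lam i = lam' i" for i using bi[of i] unfolding bb_def by simp
  then show ?thesis using \<open>s = s'\<close> by auto
qed

lemma config_of_eq: "is_partition lam \<Longrightarrow> config_of (beta_set s lam) = (lam, s)"
  unfolding config_of_def
  by (rule the_equality) (auto dest: beta_unique)

lemma sum_down: "(\<Sum>i<y. h (s - int i - 1)) = (\<Sum>a\<in>{s - int y..<s}. (h::int\<Rightarrow>'a::comm_monoid_add) a)"
  by (rule sum.reindex_bij_witness[where i="\<lambda>a. nat (s - a - 1)" and j="\<lambda>i. s - int i - 1"]) auto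

lemma KL:
  assumes p: "is_partition lam" and L: "{a. a < L} \<subseteq> range (bb s lam)"
    and n: "\<forall>i\<ge>n. lam i = 0" and y: "y \<ge> n" "int y \<ge> s - L"
  shows "L \<le> s" "finite (range (bb s lam) \<inter> {L..})"
    "int (card (range (bb s lam) \<inter> {L..})) = s - L"
    "(\<Sum>i<y. h (bb s lam i) - h (s - int i - 1)) =
       (\<Sum>b\<in>range (bb s lam) \<inter> {L..}. h b) - (\<Sum>a\<in>{L..<s}. (h::int\<Rightarrow>int) a)"
proof -
  let ?R = "range (bb s lam)"
  have img: "bb s lam ` {..<y} = ?R \<inter> {s - int y..}"
  proof
    show "bb s lam ` {..<y} \<subseteq> ?R \<inter> {s - int y..}"
    proof
      fix c assume "c \<in> bb s lam ` {..<y}"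
      then obtain i where "i < y" "c = bb s lam i" by auto
      moreover have "s - int i - 1 \<le> bb s lam i" by (rule bb_ge)
      ultimately show "c \<in> ?R \<inter> {s - int y..}" by auto
    qed
  next
    show "?R \<inter> {s - int y..} \<subseteq> bb s lam ` {..<y}"
    proof
      fix c assume "c \<in> ?R \<inter> {s - int y..}"
      then obtain i where i: "c = bb s lam i" "c \<ge> s - int y" by auto
      have "i < y"
      proof (rule ccontr)
        assume "\<not> i < y"
        then have "bb s lam i = s - int i - 1" using bb_tail[OF n] y by auto
        then show False using i \<open>\<not> i < y\<close> by auto
      qed
      then show "c \<in> bb s lam ` {..<y}" using i by auto
    qed
  qed
  have split: "?R \<inter> {s - int y..} = (?R \<inter> {L..}) \<union> {s - int y..<L}"
    using L y by auto
  have disj: "(?R \<inter> {L..}) \<inter> {s - int y..<L} = {}" by auto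
  have fin: "finite (?R \<inter> {L..})"
  proof -
    have "finite (bb s lam ` {..<y})" by simp
    then have "finite (?R \<inter> {s - int y..})" unfolding img .
    then show ?thesis unfolding split by simp
  qed
  then show "finite (?R \<inter> {L..})" .
  have cy: "card (?R \<inter> {s - int y..}) = y"
    by (metis card_image card_lessThan img inj_on_subset[OF bb_inj[OF p]] subset_UNIV)
  then have "y = card (?R \<inter> {L..}) + card {s - int y..<L}"
    using split disj fin by (simp add: card_Un_disjoint)
  then have c1: "int y = int (card (?R \<inter> {L..})) + (L - (s - int y))"
    using y by auto
  then show "L \<le> s" by linarith
  from c1 show "int (card (?R \<inter> {L..})) = s - L" by linarith
  have "(\<Sum>i<y. h (bb s lam i)) = (\<Sum>b\<in>bb s lam ` {..<y}. h b)"
    by (simp add: sum.reindex inj_on_subset[OF bb_inj[OF p]])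
  also have "\<dots> = (\<Sum>b\<in>?R \<inter> {L..}. h b) + (\<Sum>a\<in>{s - int y..<L}. h a)"
    unfolding img split using disj fin by (simp add: sum.union_disjoint)
  finally have s1: "(\<Sum>i<y. h (bb s lam i)) = (\<Sum>b\<in>?R \<inter> {L..}. h b) + (\<Sum>a\<in>{s - int y..<L}. h a)" .
  have "{s - int y..<s} = {s - int y..<L} \<union> {L..<s}" using \<open>L \<le> s\<close> y by auto
  then have s2: "(\<Sum>i<y. h (s - int i - 1)) = (\<Sum>a\<in>{s - int y..<L}. h a) + (\<Sum>a\<in>{L..<s}. h a)"
    unfolding sum_down by (simp add: sum.union_disjoint ivl_disj_int)
  show "(\<Sum>i<y. h (bb s lam i) - h (s - int i - 1)) =
       (\<Sum>b\<in>?R \<inter> {L..}. h b) - (\<Sum>a\<in>{L..<s}. h a)"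
    using s1 s2 by (simp add: sum_subtractf)
qed

lemma div_succ: assumes "(e::int) > 0" shows "(x + 1) div e = x div e + (if (x+1) mod e = 0 then 1 else 0)"
proof -
  have r: "0 \<le> x mod e" "x mod e < e" using assms by auto
  show ?thesis
  proof (cases "x mod e + 1 = e")
    case True
    have "x + 1 = x div e * e + e" using True div_mult_mod_eq[of x e] by linarith
    then have "x + 1 = (x div e + 1) * e" by (simp add: distrib_right)
    then show ?thesis using assms by simp
  next
    case False
    then have lt: "x mod e + 1 < e" using r by auto
    have xe: "x + 1 = (x mod e + 1) + x div e * e" using div_mult_mod_eq[of x e] by linarith
    have "(x+1) div e = ((x mod e + 1) + x div e * e) div e" using xe by (rule arg_cong)
    also have "\<dots> = x div e + (x mod e + 1) div e" using assms by (intro div_mult_self1) simp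
    finally have "(x+1) div e = x div e + (x mod e + 1) div e" .
    moreover have "(x mod e + 1) div e = 0" using lt r by simp
    moreover have "(x+1) mod e = ((x mod e + 1) + x div e * e) mod e" using xe by (rule arg_cong)
    moreover have "((x mod e + 1) + x div e * e) mod e = (x mod e + 1) mod e" by (rule mod_mult_self1)
    moreover have "(x mod e + 1) mod e = x mod e + 1" using lt r by (intro mod_pos_pos_trivial) auto
    ultimately show ?thesis using r by auto
  qed
qed

lemma count_res:
  assumes e: "(e::int) > 0" and j: "0 \<le> j" "j < e" and uv: "u \<le> v"
  shows "int (card {a\<in>{u<..v}. a mod e = j}) = (v - j) div e - (u - j) div e"
  using uv
proof (induction v rule: int_ge_induct)
  case base
  then show ?case by simp
next
  case (step v)
  have iff: "(v + 1 - j) mod e = 0 \<longleftrightarrow> (v + 1) mod e = j"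
  proof -
    have "(v + 1 - j) mod e = 0 \<longleftrightarrow> e dvd (v + 1 - j)" by (simp add: dvd_eq_mod_eq_0)
    also have "\<dots> \<longleftrightarrow> (v+1) mod e = j mod e" by (simp add: mod_eq_dvd_iff)
    also have "j mod e = j" using j by simp
    finally show ?thesis .
  qed
  have ds: "(v + 1 - j) div e = (v - j) div e + (if (v + 1) mod e = j then 1 else 0)"
    using div_succ[OF e, of "v - j"] iff by (simp add: algebra_simps)
  show ?case
  proof (cases "(v + 1) mod e = j")
    case True
    have "{a\<in>{u<..v+1}. a mod e = j} = insert (v+1) {a\<in>{u<..v}. a mod e = j}"
      using True step by auto
    moreover have "finite {a\<in>{u<..v}. a mod e = j}" by (rule finite_subset[of _ "{u<..v}"]) auto
    moreover have "v + 1 \<notin> {a\<in>{u<..v}. a mod e = j}" by simp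
    ultimately have "card {a\<in>{u<..v+1}. a mod e = j} = card {a\<in>{u<..v}. a mod e = j} + 1" by simp
    then show ?thesis using step ds True by simp
  next
    case False
    have "{a\<in>{u<..v+1}. a mod e = j} = {a\<in>{u<..v}. a mod e = j}"
    proof (rule set_eqI)
      fix a show "a \<in> {a\<in>{u<..v+1}. a mod e = j} \<longleftrightarrow> a \<in> {a\<in>{u<..v}. a mod e = j}"
        using False by (cases "a = v + 1") auto
    qed
    then show ?thesis using step ds False by simp
  qed
qed

definition rc :: "nat \<Rightarrow> config \<Rightarrow> int \<Rightarrow> nat" where
  "rc e c j = card {(x,y). 1 \<le> x \<and> 1 \<le> y \<and> y \<le> fst c (x - 1) \<and> (snd c + int y - int x) mod int e = j}"

lemma rc_rows:
  assumes n: "\<forall>i\<ge>n. lam i = 0"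
  shows "rc e (lam, s) j = (\<Sum>i<n. card {y. 1 \<le> y \<and> y \<le> lam i \<and> (s + int y - int (i+1)) mod int e = j})"
proof -
  let ?T = "\<lambda>x. {y. 1 \<le> y \<and> y \<le> lam (x - 1) \<and> (s + int y - int x) mod int e = j}"
  have eq: "{(x,y). 1 \<le> x \<and> 1 \<le> y \<and> y \<le> lam (x - 1) \<and> (s + int y - int x) mod int e = j}
      = Sigma {1..n} ?T"
  proof -
    have bound: "x \<le> n" if "1 \<le> y" "y \<le> lam (x - 1)" for x y
    proof -
      have "lam (x - 1) \<noteq> 0" using that by auto
      then have "x - 1 < n" using n by (meson not_le)
      then show "x \<le> n" by auto
    qed
    show ?thesis using bound by auto
  qed
  have fin: "finite (?T x)" for x by (rule finite_subset[of _ "{..lam (x-1)}"]) auto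
  have "rc e (lam, s) j = (\<Sum>x\<in>{1..n}. card (?T x))"
    unfolding rc_def fst_conv snd_conv eq by (rule card_SigmaI) (auto simp: fin)
  also have "\<dots> = (\<Sum>i<n. card (?T (Suc i)))"
  proof -
    have "{1..n} = Suc ` {..<n}"
    proof (rule set_eqI)
      fix x show "x \<in> {1..n} \<longleftrightarrow> x \<in> Suc ` {..<n}"
        by (cases x) auto
    qed
    then show ?thesis by (simp add: sum.reindex)
  qed
  finally show ?thesis by simp
qed

lemma row_card:
  assumes e: "e > 0" and j: "0 \<le> j" "j < int e"
  shows "int (card {y. 1 \<le> y \<and> y \<le> lam i \<and> (s + int y - int (i+1)) mod int e = j})
       = (bb s lam i - j) div int e - (s - int i - 1 - j) div int e"
proof -
  let ?T = "{y. 1 \<le> y \<and> y \<le> lam i \<and> (s + int y - int (i+1)) mod int e = j}"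
  let ?f = "\<lambda>y. s + int y - int (i+1)"
  have inj: "inj_on ?f ?T" by (auto simp: inj_on_def)
  have img: "?f ` ?T = {a\<in>{s - int i - 1<..bb s lam i}. a mod int e = j}"
  proof
    show "?f ` ?T \<subseteq> {a\<in>{s - int i - 1<..bb s lam i}. a mod int e = j}"
      unfolding bb_def by auto
  next
    show "{a\<in>{s - int i - 1<..bb s lam i}. a mod int e = j} \<subseteq> ?f ` ?T"
    proof
      fix a assume a: "a \<in> {a\<in>{s - int i - 1<..bb s lam i}. a mod int e = j}"
      define y where "y = nat (a - s + int i + 1)"
      have "a = ?f y" "y \<in> ?T" using a unfolding y_def bb_def by auto
      then show "a \<in> ?f ` ?T" by blast
    qed
  qed
  have "card ?T = card {a\<in>{s - int i - 1<..bb s lam i}. a mod int e = j}"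
    using card_image[OF inj] img by simp
  moreover have "s - int i - 1 \<le> bb s lam i" by (rule bb_ge)
  ultimately show ?thesis using count_res[of "int e" j "s - int i - 1" "bb s lam i"] e j by simp
qed

definition F :: "nat \<Rightarrow> int \<Rightarrow> int \<Rightarrow> int" where
  "F e j a = (a - j) div int e"

lemma rc_formula:
  assumes e: "e > 0" and j: "0 \<le> j" "j < int e"
    and p: "is_partition lam" and L: "{a. a < L} \<subseteq> range (bb s lam)"
  shows "int (rc e (lam, s) j) = (\<Sum>b\<in>range (bb s lam) \<inter> {L..}. F e j b) - (\<Sum>a\<in>{L..<s}. F e j a)"
proof -
  obtain n where n: "\<forall>i\<ge>n. lam i = 0" using part_zero[OF p] by blast
  define y where "y = n + nat (s - L)"
  have y: "y \<ge> n" "int y \<ge> s - L" unfolding y_def by auto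
  have n': "\<forall>i\<ge>y. lam i = 0" using n y by auto
  have "int (rc e (lam, s) j) = (\<Sum>i<y. int (card {y. 1 \<le> y \<and> y \<le> lam i \<and> (s + int y - int (i+1)) mod int e = j}))"
    unfolding rc_rows[OF n'] by (rule of_nat_sum)
  also have "\<dots> = (\<Sum>i<y. F e j (bb s lam i) - F e j (s - int i - 1))"
    unfolding F_def by (rule sum.cong[OF refl], rule row_card[OF e j])
  also have "\<dots> = (\<Sum>b\<in>range (bb s lam) \<inter> {L..}. F e j b) - (\<Sum>a\<in>{L..<s}. F e j a)"
    by (rule KL(4)[OF p L n y])
  finally show ?thesis .
qed

lemma size_formula:
  assumes p: "is_partition lam" and L: "{a. a < L} \<subseteq> range (bb s lam)"
  shows "int (part_size lam) = (\<Sum>b\<in>range (bb s lam) \<inter> {L..}. b) - (\<Sum>a\<in>{L..<s}. a)"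
proof -
  obtain n where n: "\<forall>i\<ge>n. lam i = 0" using part_zero[OF p] by blast
  define y where "y = n + nat (s - L)"
  have y: "y \<ge> n" "int y \<ge> s - L" unfolding y_def by auto
  have "part_size lam = (\<Sum>i<y. lam i)"
    unfolding part_size_def
  proof (rule sum.mono_neutral_left)
    show "{i. lam i \<noteq> 0} \<subseteq> {..<y}"
    proof
      fix i assume "i \<in> {i. lam i \<noteq> 0}"
      then have "\<not> i \<ge> y" using n y by auto
      then show "i \<in> {..<y}" by simp
    qed
  qed auto
  then have "int (part_size lam) = (\<Sum>i<y. int (lam i))" by simp
  also have "\<dots> = (\<Sum>i<y. id (bb s lam i) - id (s - int i - 1))"
    by (rule sum.cong[OF refl]) (simp add: bb_def)
  also have "\<dots> = (\<Sum>b\<in>range (bb s lam) \<inter> {L..}. id b) - (\<Sum>a\<in>{L..<s}. id a)"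
    by (rule KL(4)[OF p L n y])
  finally show ?thesis by simp
qed

lemma charge_formula:
  assumes p: "is_partition lam" and L: "{a. a < L} \<subseteq> range (bb s lam)"
  shows "s = L + int (card (range (bb s lam) \<inter> {L..}))"
proof -
  obtain n where n: "\<forall>i\<ge>n. lam i = 0" using part_zero[OF p] by blast
  define y where "y = n + nat (s - L)"
  have y: "y \<ge> n" "int y \<ge> s - L" unfolding y_def by auto
  show ?thesis using KL(3)[OF p L n y] by linarith
qed

lemma beta_exists:
  assumes "is_beta_set B"
  shows "\<exists>lam s. is_partition lam \<and> beta_set s lam = B"
proof -
  obtain K where K: "\<forall>b\<le>K. b \<in> B" using assms unfolding is_beta_set_def by auto
  obtain U where U: "\<forall>b\<ge>U. b \<notin> B" using assms unfolding is_beta_set_def by auto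
  define FF where "FF = B \<inter> {K<..}"
  have finF: "finite FF" unfolding FF_def
    by (rule finite_subset[of _ "{K<..<U}"]) (use U in \<open>auto simp: not_le[symmetric]\<close>)
  obtain xs where xs: "sorted_wrt (<) xs" "set xs = FF"
    using finite_set_strict_sorted[OF finF] by blast
  define m where "m = length xs"
  define s where "s = K + 1 + int m"
  define f where "f i = (if i < m then xs ! (m - 1 - i) else s - 1 - int i)" for i
  have xsF: "k < m \<Longrightarrow> xs ! k \<in> FF" for k using xs(2) unfolding m_def by auto
  have strict: "f j < f i" if "i < j" for i j
  proof (cases "j < m")
    case True
    then have "xs ! (m - 1 - j) < xs ! (m - 1 - i)"
      using that xs(1) sorted_wrt_nth_less[of "(<)" xs "m - 1 - j" "m - 1 - i"] unfolding m_def by auto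
    then show ?thesis using True that unfolding f_def by auto
  next
    case False
    show ?thesis
    proof (cases "i < m")
      case True
      then have "f i > K" using xsF[of "m - 1 - i"] unfolding f_def FF_def by auto
      moreover have "f j \<le> K" using False unfolding f_def s_def by auto
      ultimately show ?thesis by auto
    next
      case False
      then show ?thesis using \<open>\<not> j < m\<close> that unfolding f_def by auto
    qed
  qed
  define g where "g i = f i + int i" for i
  have gs: "g (Suc i) \<le> g i" for i using strict[of i "Suc i"] unfolding g_def by auto
  have gm: "i \<ge> m \<Longrightarrow> g i = s - 1" for i unfolding g_def f_def by auto
  have gge: "g i \<ge> s - 1" for i
  proof (cases "i \<le> m")
    case True
    then have "g m \<le> g i" using lift_Suc_antimono_le[of g, OF gs True] by simp
    then show ?thesis using gm[of m] by simp
  next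
    case False then show ?thesis using gm[of i] by simp
  qed
  define lam where "lam i = nat (g i - (s - 1))" for i
  have bbf: "bb s lam i = f i" for i
    unfolding bb_def lam_def using gge[of i] unfolding g_def by simp
  have part: "is_partition lam"
    unfolding is_partition_def
  proof
    show "\<forall>i. lam (Suc i) \<le> lam i" unfolding lam_def using gs by (simp add: nat_mono)
    show "finite {i. lam i \<noteq> 0}"
    proof (rule finite_subset[of _ "{..<m}"])
      show "{i. lam i \<noteq> 0} \<subseteq> {..<m}"
      proof
        fix x assume "x \<in> {i. lam i \<noteq> 0}"
        then have "\<not> x \<ge> m" using gm[of x] unfolding lam_def by auto
        then show "x \<in> {..<m}" by simp
      qed
    qed simp
  qed
  have "range f = B"
  proof
    show "range f \<subseteq> B"
    proof
      fix b assume "b \<in> range f"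
      then obtain i where i: "b = f i" by auto
      show "b \<in> B"
      proof (cases "i < m")
        case True then show ?thesis using xsF[of "m - 1 - i"] i unfolding f_def FF_def by auto
      next
        case False then show ?thesis using K i unfolding f_def s_def by auto
      qed
    qed
  next
    show "B \<subseteq> range f"
    proof
      fix b assume b: "b \<in> B"
      show "b \<in> range f"
      proof (cases "b > K")
        case True
        then have "b \<in> set xs" using xs(2) b unfolding FF_def by auto
        then obtain k where k: "k < m" "xs ! k = b" unfolding m_def by (metis in_set_conv_nth)
        then have "f (m - 1 - k) = b" unfolding f_def by auto
        then show ?thesis by (metis rangeI)
      next
        case False
        define i where "i = nat (s - 1 - b)"
        have "i \<ge> m" using False unfolding i_def s_def by auto
        then have "f i = b" using False unfolding f_def i_def s_def by auto
        then show ?thesis by (metis rangeI)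
      qed
    qed
  qed
  then have "beta_set s lam = B" unfolding beta_set_range using bbf by (metis ext)
  then show ?thesis using part by blast
qed

definition bs :: "config \<Rightarrow> int set" where "bs c = beta_set (snd c) (fst c)"

lemma beta_is_beta: assumes p: "is_partition lam" shows "is_beta_set (beta_set s lam)"
proof -
  obtain n where n: "\<forall>i\<ge>n. lam i = 0" using part_zero[OF p] by blast
  have lo: "\<forall>b\<le>s - int n - 1. b \<in> beta_set s lam"
    unfolding beta_set_range using below_in[OF n] by auto
  have hi: "\<forall>b\<ge>int (lam 0) + s. b \<notin> beta_set s lam"
  proof (intro allI impI)
    fix b assume b: "b \<ge> int (lam 0) + s"
    show "b \<notin> beta_set s lam"
    proof
      assume "b \<in> beta_set s lam"
      then obtain i where "b = bb s lam i" unfolding beta_set_range by auto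
      moreover have "lam i \<le> lam 0" using part_antimono[OF p, of 0 i] by simp
      ultimately show False using b unfolding bb_def by auto
    qed
  qed
  show ?thesis unfolding is_beta_set_def using lo hi by blast
qed

lemma config_of_prop:
  assumes "is_beta_set B"
  shows "is_partition (fst (config_of B))" "bs (config_of B) = B"
proof -
  obtain lam s where ls: "is_partition lam" "beta_set s lam = B" using beta_exists[OF assms] by blast
  have "config_of B = (lam, s)" using config_of_eq[OF ls(1), of s] ls(2) by simp
  then show "is_partition (fst (config_of B))" "bs (config_of B) = B" using ls unfolding bs_def by auto
qed

definition run :: "nat \<Rightarrow> nat \<Rightarrow> int set \<Rightarrow> int set" where
  "run e i B = {(b - int i) div int e | b. b \<in> B \<and> b mod int e = int i}"

lemma run_mem:
  assumes e: "e > 0" and i: "i < e"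
  shows "c \<in> run e i B \<longleftrightarrow> c * int e + int i \<in> B"
proof
  assume "c \<in> run e i B"
  then obtain b where b: "b \<in> B" "b mod int e = int i" "c = (b - int i) div int e"
    unfolding run_def by auto
  have "b = b div int e * int e + int i" using b(2) div_mult_mod_eq[of b "int e"] by simp
  moreover have "(b - int i) div int e = b div int e"
  proof -
    have "b - int i = b div int e * int e" using b(2) div_mult_mod_eq[of b "int e"] by simp
    then show ?thesis using e by simp
  qed
  ultimately show "c * int e + int i \<in> B" using b by simp
next
  assume c: "c * int e + int i \<in> B"
  have m: "(c * int e + int i) mod int e = int i" using e i by simp
  have d: "(c * int e + int i - int i) div int e = c" using e by simp
  show "c \<in> run e i B" unfolding run_def using c m d by (metis (mono_tags, lifting) mem_Collect_eq)
qed

lemma run_beta: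
  assumes B: "is_beta_set B" and e: "e > 0" and i: "i < e"
  shows "is_beta_set (run e i B)"
proof -
  obtain n where n: "\<forall>b\<le>n. b \<in> B" using B unfolding is_beta_set_def by auto
  obtain m where m: "\<forall>b\<ge>m. b \<notin> B" using B unfolding is_beta_set_def by auto
  have lo: "\<forall>c\<le>n div int e - 1. c \<in> run e i B"
  proof (intro allI impI)
    fix c assume c: "c \<le> n div int e - 1"
    have "c * int e \<le> (n div int e - 1) * int e" using c e by (intro mult_right_mono) auto
    also have "\<dots> = n div int e * int e - int e" by (simp add: algebra_simps)
    also have "n div int e * int e \<le> n" using e by (metis div_mult_mod_eq le_add_same_cancel1 pos_mod_sign of_nat_0_less_iff)
    finally have "c * int e + int i \<le> n" using i by linarith
    then show "c \<in> run e i B" using n run_mem[OF e i] by blast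
  qed
  have hi: "\<forall>c\<ge>\<bar>m\<bar>. c \<notin> run e i B"
  proof (intro allI impI)
    fix c assume c: "c \<ge> \<bar>m\<bar>"
    have "c * 1 \<le> c * int e" using c e by (intro mult_left_mono) auto
    then have "c * int e + int i \<ge> m" using c by linarith
    then show "c \<notin> run e i B" using m run_mem[OF e i] by blast
  qed
  show ?thesis unfolding is_beta_set_def using lo hi by blast
qed

lemma recon:
  assumes e: "e > 0"
  shows "b \<in> B \<longleftrightarrow> b div int e \<in> run e (nat (b mod int e)) B"
proof -
  have lt: "nat (b mod int e) < e" using e by (simp add: nat_less_iff)
  have "int (nat (b mod int e)) = b mod int e" using e by simp
  then show ?thesis using run_mem[OF e lt, of "b div int e" B] by simp
qed

lemma run_ext:
  assumes e: "e > 0" and r: "\<forall>i<e. run e i B = run e i B'"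
  shows "B = B'"
proof (rule set_eqI)
  fix b
  have lt: "nat (b mod int e) < e" using e by (simp add: nat_less_iff)
  show "b \<in> B \<longleftrightarrow> b \<in> B'" using recon[OF e, of b B] recon[OF e, of b B'] r lt by simp
qed

lemma beta_shift: "beta_set (t + m) rho = (\<lambda>x. x + m) ` beta_set t rho"
  unfolding beta_set_range bb_def by (auto simp: image_iff algebra_simps)

definition phi :: "nat \<Rightarrow> int list \<Rightarrow> int \<Rightarrow> int" where
  "phi e M b = b + int e * M ! nat (b mod int e)"

lemma phi_mod: "phi e M b mod int e = b mod int e"
  unfolding phi_def by simp

lemma run_phi:
  assumes e: "e > 0" and i: "i < e"
  shows "run e i (phi e M ` B) = (\<lambda>x. x + M ! i) ` run e i B"
proof (rule set_eqI)
  fix c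
  show "c \<in> run e i (phi e M ` B) \<longleftrightarrow> c \<in> (\<lambda>x. x + M ! i) ` run e i B"
  proof
    assume "c \<in> run e i (phi e M ` B)"
    then have "c * int e + int i \<in> phi e M ` B" using run_mem[OF e i] by blast
    then obtain b where b: "b \<in> B" "phi e M b = c * int e + int i" by auto
    have "b mod int e = int i" using phi_mod[of e M b] b(2) e i by simp
    then have "nat (b mod int e) = i" by simp
    then have "b = (c - M ! i) * int e + int i" using b(2) unfolding phi_def by (simp add: algebra_simps)
    then have "c - M ! i \<in> run e i B" using b(1) run_mem[OF e i] by simp
    then show "c \<in> (\<lambda>x. x + M ! i) ` run e i B" by (metis (no_types, lifting) diff_add_cancel image_eqI)
  next
    assume "c \<in> (\<lambda>x. x + M ! i) ` run e i B"
    then obtain d where d: "d \<in> run e i B" "c = d + M ! i" by auto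
    then have db: "d * int e + int i \<in> B" using run_mem[OF e i] by blast
    have "(d * int e + int i) mod int e = int i" using e i by simp
    then have "phi e M (d * int e + int i) = c * int e + int i" unfolding phi_def d(2) by (simp add: algebra_simps)
    then have "c * int e + int i \<in> phi e M ` B" using db by (metis image_eqI)
    then show "c \<in> run e i (phi e M ` B)" using run_mem[OF e i] by blast
  qed
qed

lemma phi_beta:
  assumes B: "is_beta_set B" and e: "e > 0" and M: "length M = e" "\<forall>x\<in>set M. x \<ge> 0"
  shows "is_beta_set (phi e M ` B)"
proof -
  obtain n where n: "\<forall>b\<le>n. b \<in> B" using B unfolding is_beta_set_def by auto
  obtain m where m: "\<forall>b\<ge>m. b \<notin> B" using B unfolding is_beta_set_def by auto
  have Mk: "k < e \<Longrightarrow> 0 \<le> M ! k \<and> M ! k \<le> sum_list M" for k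
    using M by (metis nth_mem member_le_sum_list)
  have ltk: "nat (b mod int e) < e" for b using e by (simp add: nat_less_iff)
  have lo: "\<forall>a\<le>n. a \<in> phi e M ` B"
  proof (intro allI impI)
    fix a assume a: "a \<le> n"
    define b where "b = a - int e * M ! nat (a mod int e)"
    have "b = a + (- M ! nat (a mod int e)) * int e" unfolding b_def by simp
    then have bm: "b mod int e = a mod int e" by (simp only: mod_mult_self1)
    have "b \<le> a" unfolding b_def using Mk[OF ltk[of a]] by simp
    then have "b \<in> B" using n a by auto
    moreover have "phi e M b = a" unfolding phi_def bm unfolding b_def by simp
    ultimately show "a \<in> phi e M ` B" by (metis image_eqI)
  qed
  have hi: "\<forall>a\<ge>m + int e * sum_list M. a \<notin> phi e M ` B"
  proof (intro allI impI)
    fix a assume a: "a \<ge> m + int e * sum_list M"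
    show "a \<notin> phi e M ` B"
    proof
      assume "a \<in> phi e M ` B"
      then obtain b where b: "b \<in> B" "a = phi e M b" by auto
      have "int e * M ! nat (b mod int e) \<le> int e * sum_list M"
        using Mk[OF ltk[of b]] by (intro mult_left_mono) auto
      then have "b \<ge> m" using a b(2) unfolding phi_def by linarith
      then show False using m b by auto
    qed
  qed
  show ?thesis unfolding is_beta_set_def using lo hi by blast
qed

lemma eta_run: "eta e c = map (\<lambda>i. config_of (run e i (bs c))) [0..<e]"
  unfolding eta_def run_def bs_def by simp

lemma Str_prop:
  assumes e: "e > 0" and M: "length M = e" "\<forall>x\<in>set M. x \<ge> 0" and p: "is_partition (fst c)"
  shows "is_partition (fst (Str e c M)) \<and> bs (Str e c M) = phi e M ` bs c"
proof -
  define B where "B = bs c"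
  have isB: "is_beta_set B" unfolding B_def bs_def by (rule beta_is_beta[OF p])
  have isPB: "is_beta_set (phi e M ` B)" by (rule phi_beta[OF isB e M])
  define c0 where "c0 = config_of (phi e M ` B)"
  have c0: "is_partition (fst c0)" "bs c0 = phi e M ` B"
    unfolding c0_def using config_of_prop[OF isPB] by auto
  define T where "T = map (\<lambda>i. (fst (eta e c ! i), snd (eta e c ! i) + M ! i)) [0..<e]"
  have runB: "is_beta_set (run e i B)" if "i < e" for i by (rule run_beta[OF isB e that])
  have key: "config_of (run e i (phi e M ` B)) = (fst (eta e c ! i), snd (eta e c ! i) + M ! i)"
    if i: "i < e" for i
  proof -
    define X where "X = config_of (run e i B)"
    have X: "is_partition (fst X)" "beta_set (snd X) (fst X) = run e i B"
      using config_of_prop[OF runB[OF i]] unfolding X_def bs_def by auto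
    have ex: "eta e c ! i = X" unfolding eta_run X_def B_def using i by simp
    have "run e i (phi e M ` B) = beta_set (snd X + M ! i) (fst X)"
      unfolding run_phi[OF e i] beta_shift X(2) ..
    then show ?thesis unfolding ex using config_of_eq[OF X(1)] by simp
  qed
  have P0: "is_partition (fst c0) \<and> eta e c0 = T"
  proof
    show "is_partition (fst c0)" by (rule c0(1))
    show "eta e c0 = T" unfolding eta_run[of e c0] c0(2) T_def
      by (rule map_cong[OF refl]) (use key in auto)
  qed
  have uniq: "c' = c0" if P: "is_partition (fst c') \<and> eta e c' = T" for c'
  proof -
    have eq: "eta e c' = eta e c0" using P P0 by simp
    have isB': "is_beta_set (bs c')" unfolding bs_def using P by (intro beta_is_beta) auto
    have isB0: "is_beta_set (bs c0)" using isPB c0 by simp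
    have "\<forall>i<e. run e i (bs c') = run e i (bs c0)"
    proof (intro allI impI)
      fix i assume i: "i < e"
      have "eta e c' ! i = eta e c0 ! i" using eq by simp
      then have "config_of (run e i (bs c')) = config_of (run e i (bs c0))"
        unfolding eta_run using i by simp
      then show "run e i (bs c') = run e i (bs c0)"
        using config_of_prop(2)[OF run_beta[OF isB' e i]] config_of_prop(2)[OF run_beta[OF isB0 e i]]
        by metis
    qed
    then have "bs c' = bs c0" by (rule run_ext[OF e])
    then have "fst c' = fst c0 \<and> snd c' = snd c0"
      using beta_unique[of "fst c'" "fst c0" "snd c'" "snd c0"] P c0(1) unfolding bs_def by auto
    then show ?thesis by (simp add: prod_eq_iff)
  qed
  have "Str e c M = c0"
    unfolding Str_def T_def[symmetric]
  proof (rule the_equality)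
    show "is_partition (fst c0) \<and> eta e c0 = T" by (rule P0)
    show "\<And>c'. is_partition (fst c') \<and> eta e c' = T \<Longrightarrow> c' = c0" by (rule uniq)
  qed
  then show ?thesis using c0 B_def by simp
qed

lemma fin_T: assumes p: "is_partition lam"
  shows "finite {(x,y). 1 \<le> x \<and> 1 \<le> y \<and> y \<le> lam (x - 1)}"
proof -
  obtain n where n: "\<forall>i\<ge>n. lam i = 0" using part_zero[OF p] by blast
  have "{(x,y). 1 \<le> x \<and> 1 \<le> y \<and> y \<le> lam (x - 1)} \<subseteq> {..n} \<times> {..lam 0}"
  proof
    fix z assume "z \<in> {(x,y). 1 \<le> x \<and> 1 \<le> y \<and> y \<le> lam (x - 1)}"
    then obtain x y where z: "z = (x,y)" "1 \<le> x" "1 \<le> y" "y \<le> lam (x - 1)" by auto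
    then have "lam (x - 1) \<noteq> 0" by auto
    then have "\<not> x - 1 \<ge> n" using n by auto
    moreover have "lam (x - 1) \<le> lam 0" using part_antimono[OF p, of 0 "x - 1"] by simp
    ultimately show "z \<in> {..n} \<times> {..lam 0}" using z by auto
  qed
  then show ?thesis by (rule finite_subset) auto
qed

definition Sk :: "nat \<Rightarrow> config list \<Rightarrow> int \<Rightarrow> nat \<Rightarrow> (nat \<times> nat) set" where
  "Sk e cs j k = {(x,y). 1 \<le> x \<and> 1 \<le> y \<and> y \<le> fst (cs ! (k - 1)) (x - 1)
      \<and> (snd (cs ! (k - 1)) + int y - int x) mod int e = j}"

lemma count_res_mset:
  assumes mc: "is_multiconfig cs"
  shows "count (residue_mset e cs) j = (\<Sum>k<length cs. rc e (cs ! k) j)"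
proof -
  let ?f = "\<lambda>(x, y, k). (snd (cs ! (k - 1)) + int y - int x) mod int e"
  let ?T = "\<lambda>k. {(x,y). 1 \<le> x \<and> 1 \<le> y \<and> y \<le> fst (cs ! (k - 1)) (x - 1)}"
  let ?g = "\<lambda>k (x,y). (x, y, k::nat)"
  have pk: "is_partition (fst (cs ! (k - 1)))" if "k \<in> {1..length cs}" for k
    using mc that unfolding is_multiconfig_def by (metis atLeastAtMost_iff diff_less le_trans less_numeral_extra(1) nat_less_le nth_mem order_less_le_trans)
  have nd: "nodes cs = (\<Union>k\<in>{1..length cs}. ?g k ` ?T k)"
    unfolding nodes_def by auto
  have finA: "finite (nodes cs)" unfolding nd using fin_T[OF pk] by auto
  have "count (residue_mset e cs) j = (\<Sum>y\<in>?f -` {j} \<inter> nodes cs. 1)"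
    unfolding residue_mset_def count_image_mset using finA by simp
  also have "\<dots> = card (?f -` {j} \<inter> nodes cs)" by simp
  also have "?f -` {j} \<inter> nodes cs = (\<Union>k\<in>{1..length cs}. ?g k ` Sk e cs j k)"
    unfolding nodes_def Sk_def by auto
  also have "card \<dots> = (\<Sum>k\<in>{1..length cs}. card (?g k ` Sk e cs j k))"
  proof (rule card_UN_disjoint)
    show "finite {1..length cs}" by simp
    show "\<forall>k\<in>{1..length cs}. finite (?g k ` Sk e cs j k)"
    proof
      fix k assume k: "k \<in> {1..length cs}"
      have "Sk e cs j k \<subseteq> ?T k" unfolding Sk_def by auto
      then show "finite (?g k ` Sk e cs j k)" using fin_T[OF pk[OF k]] finite_subset by blast
    qed
    show "\<forall>k\<in>{1..length cs}. \<forall>k'\<in>{1..length cs}. k \<noteq> k' \<longrightarrow> ?g k ` Sk e cs j k \<inter> ?g k' ` Sk e cs j k' = {}"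
      by auto
  qed
  also have "\<dots> = (\<Sum>k\<in>{1..length cs}. card (Sk e cs j k))"
    by (rule sum.cong[OF refl], rule card_image) (auto simp: inj_on_def)
  also have "\<dots> = (\<Sum>k<length cs. card (Sk e cs j (Suc k)))"
  proof -
    have "{1..length cs} = Suc ` {..<length cs}"
    proof (rule set_eqI)
      fix x show "x \<in> {1..length cs} \<longleftrightarrow> x \<in> Suc ` {..<length cs}"
        by (cases x) auto
    qed
    then show ?thesis by (simp add: sum.reindex)
  qed
  also have "\<dots> = (\<Sum>k<length cs. rc e (cs ! k) j)"
    unfolding Sk_def rc_def by simp
  finally show ?thesis .
qed

lemma multi_size_sum: "multi_size cs = (\<Sum>k<length cs. part_size (fst (cs ! k)))"
  unfolding multi_size_def by (simp add: sum_list_sum_nth atLeast0LessThan)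

definition Q :: "int \<Rightarrow> (int \<Rightarrow> int) \<Rightarrow> config \<Rightarrow> int" where
  "Q L h c = (\<Sum>b\<in>bs c \<inter> {L..}. h b)"

definition Zs :: "nat \<Rightarrow> int list \<Rightarrow> int \<Rightarrow> int set" where
  "Zs e M L = {b. b < L \<and> L \<le> phi e M b}"

context
  fixes e :: nat and M :: "int list"
  assumes e: "e > 0" and Ml: "length M = e" and Mp: "\<forall>x\<in>set M. x \<ge> 0"
begin

lemma ltk: "nat (b mod int e) < e" using e by (simp add: nat_less_iff)

lemma Mk: "k < e \<Longrightarrow> 0 \<le> M ! k \<and> M ! k \<le> sum_list M"
  using Ml Mp by (metis nth_mem member_le_sum_list)

lemma phi_ge: "b \<le> phi e M b"
  unfolding phi_def using Mk[OF ltk[of b]] by simp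

lemma phi_le: "phi e M b \<le> b + int e * sum_list M"
  unfolding phi_def using Mk[OF ltk[of b]] by (simp add: mult_left_mono)

lemma phi_inj: "inj (phi e M)"
proof (rule injI)
  fix x y assume xy: "phi e M x = phi e M y"
  then have "x mod int e = y mod int e" using phi_mod[of e M x] phi_mod[of e M y] by simp
  then show "x = y" using xy unfolding phi_def by simp
qed

lemma Zs_fin: "finite (Zs e M L)"
proof (rule finite_subset[of _ "{L - int e * sum_list M..<L}"])
  show "Zs e M L \<subseteq> {L - int e * sum_list M..<L}"
  proof
    fix b assume "b \<in> Zs e M L"
    then have "b < L" "L \<le> phi e M b" unfolding Zs_def by auto
    moreover have "phi e M b \<le> b + int e * sum_list M" by (rule phi_le)
    ultimately show "b \<in> {L - int e * sum_list M..<L}" by auto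
  qed
qed simp

lemma low_phi: assumes "{a. a < L} \<subseteq> B" shows "{a. a < L} \<subseteq> phi e M ` B"
proof
  fix a assume a: "a \<in> {a. a < L}"
  define b where "b = a - int e * M ! nat (a mod int e)"
  have "b = a + (- M ! nat (a mod int e)) * int e" unfolding b_def by simp
  then have bm: "b mod int e = a mod int e" by (simp only: mod_mult_self1)
  have "b \<le> a" unfolding b_def using Mk[OF ltk[of a]] by simp
  then have "b \<in> B" using assms a by auto
  moreover have "phi e M b = a" unfolding phi_def bm unfolding b_def by simp
  ultimately show "a \<in> phi e M ` B" by (metis image_eqI)
qed

lemma phi_split:
  assumes "{a. a < L} \<subseteq> B"
  shows "phi e M ` B \<inter> {L..} = phi e M ` ((B \<inter> {L..}) \<union> Zs e M L)"
    "(B \<inter> {L..}) \<inter> Zs e M L = {}"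
proof -
  have "B \<inter> {b. L \<le> phi e M b} = (B \<inter> {L..}) \<union> Zs e M L"
    unfolding Zs_def using assms phi_ge by (auto intro: order_trans)
  moreover have "phi e M ` B \<inter> {L..} = phi e M ` (B \<inter> {b. L \<le> phi e M b})" by auto
  ultimately show "phi e M ` B \<inter> {L..} = phi e M ` ((B \<inter> {L..}) \<union> Zs e M L)" by simp
  show "(B \<inter> {L..}) \<inter> Zs e M L = {}" unfolding Zs_def by auto
qed

lemma sum_phi:
  assumes L: "{a. a < L} \<subseteq> B" and fin: "finite (B \<inter> {L..})"
  shows "(\<Sum>x\<in>phi e M ` B \<inter> {L..}. h x) = (\<Sum>b\<in>B \<inter> {L..}. h (phi e M b)) + (\<Sum>b\<in>Zs e M L. h (phi e M b))"
  unfolding phi_split(1)[OF L]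
  by (simp add: sum.reindex inj_on_subset[OF phi_inj] sum.union_disjoint[OF fin Zs_fin phi_split(2)[OF L]])

lemma card_phi:
  assumes L: "{a. a < L} \<subseteq> B" and fin: "finite (B \<inter> {L..})"
  shows "card (phi e M ` B \<inter> {L..}) = card (B \<inter> {L..}) + card (Zs e M L)"
  unfolding phi_split(1)[OF L]
  by (simp add: card_image inj_on_subset[OF phi_inj] card_Un_disjoint[OF fin Zs_fin phi_split(2)[OF L]])

lemma F_phi: "F e j (phi e M b) = F e j b + M ! nat (b mod int e)"
proof -
  have "phi e M b - j = (b - j) + M ! nat (b mod int e) * int e" unfolding phi_def by simp
  then have "(phi e M b - j) div int e = ((b - j) + M ! nat (b mod int e) * int e) div int e" by (rule arg_cong)
  also have "\<dots> = M ! nat (b mod int e) + (b - j) div int e" using e by (intro div_mult_self1) simp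
  finally show ?thesis unfolding F_def by simp
qed

lemma F_ind:
  assumes "i < e"
  shows "F e (int i) b - F e (int i + 1) b = (if b mod int e = int i then 1 else 0)"
proof -
  have "(b - int i) div int e = (b - int i - 1) div int e + (if (b - int i) mod int e = 0 then 1 else 0)"
    using div_succ[of "int e" "b - int i - 1"] e by simp
  moreover have "(b - int i) mod int e = 0 \<longleftrightarrow> b mod int e = int i"
  proof -
    have "(b - int i) mod int e = 0 \<longleftrightarrow> int e dvd (b - int i)" by (simp add: dvd_eq_mod_eq_0)
    also have "\<dots> \<longleftrightarrow> b mod int e = int i mod int e" by (simp add: mod_eq_dvd_iff)
    also have "int i mod int e = int i" using assms by simp
    finally show ?thesis .
  qed
  ultimately show ?thesis unfolding F_def by (simp add: algebra_simps)
qed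

lemma F_e: "F e (int e) b = F e 0 b - 1"
proof -
  have "b - int e = b + (-1) * int e" by simp
  then have "(b - int e) div int e = (b + (-1) * int e) div int e" by simp
  also have "\<dots> = -1 + b div int e" using e by (intro div_mult_self1) simp
  finally show ?thesis unfolding F_def by simp
qed

lemma Msel: "M ! nat (b mod int e) = (\<Sum>i<e. M ! i * (F e (int i) b - F e (int i + 1) b))"
proof -
  have "(\<Sum>i<e. M ! i * (F e (int i) b - F e (int i + 1) b)) = (\<Sum>i<e. if i = nat (b mod int e) then M ! i else 0)"
  proof (rule sum.cong[OF refl])
    fix i assume i: "i \<in> {..<e}"
    have "b mod int e = int i \<longleftrightarrow> i = nat (b mod int e)" using e by auto
    then show "M ! i * (F e (int i) b - F e (int i + 1) b) = (if i = nat (b mod int e) then M ! i else 0)"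
      using F_ind[of i b] i by auto
  qed
  also have "\<dots> = M ! nat (b mod int e)" using ltk[of b] by simp
  finally show ?thesis by simp
qed

end

lemma bs_range: "bs c = range (bb (snd c) (fst c))"
  unfolding bs_def beta_set_range ..

lemma cfg:
  assumes p: "is_partition (fst c)" and L: "{a. a < L} \<subseteq> bs c"
  shows "finite (bs c \<inter> {L..})" "snd c = L + int (card (bs c \<inter> {L..}))"
    "int (part_size (fst c)) = Q L id c - (\<Sum>a\<in>{L..<snd c}. a)"
proof -
  obtain lam s where c: "c = (lam, s)" by (cases c)
  have p': "is_partition lam" using p c by simp
  have L': "{a. a < L} \<subseteq> range (bb s lam)" using L c bs_range by simp
  obtain n where n: "\<forall>i\<ge>n. lam i = 0" using part_zero[OF p'] by blast
  show "finite (bs c \<inter> {L..})" using KL(2)[OF p' L' n, of "n + nat (s - L)"] c bs_range by simp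
  show "snd c = L + int (card (bs c \<inter> {L..}))" using charge_formula[OF p' L'] c bs_range by simp
  show "int (part_size (fst c)) = Q L id c - (\<Sum>a\<in>{L..<snd c}. a)"
    using size_formula[OF p' L'] c bs_range unfolding Q_def by simp
qed

lemma cfg_rc:
  assumes e: "e > 0" and j: "0 \<le> j" "j < int e"
    and p: "is_partition (fst c)" and L: "{a. a < L} \<subseteq> bs c"
  shows "int (rc e c j) = Q L (F e j) c - (\<Sum>a\<in>{L..<snd c}. F e j a)"
proof -
  obtain lam s where c: "c = (lam, s)" by (cases c)
  have p': "is_partition lam" using p c by simp
  have L': "{a. a < L} \<subseteq> range (bb s lam)" using L c bs_range by simp
  show ?thesis using rc_formula[OF e j p' L'] c bs_range unfolding Q_def by simp
qed

lemma rc_out: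
  assumes e: "e > 0" and j: "\<not> (0 \<le> j \<and> j < int e)"
  shows "rc e c j = 0"
proof -
  have E: "{(x,y). 1 \<le> x \<and> 1 \<le> y \<and> y \<le> fst c (x - 1) \<and> (snd c + int y - int x) mod int e = j} = {}"
    using j e by auto
  show ?thesis unfolding rc_def E by simp
qed

lemma Q_add: "Q L (\<lambda>b. f b + g b) c = Q L f c + Q L g c"
  unfolding Q_def by (rule sum.distrib)
lemma Q_diff: "Q L (\<lambda>b. f b - g b) c = Q L f c - Q L g c"
  unfolding Q_def by (rule sum_subtractf)
lemma Q_mult: "Q L (\<lambda>b. k * f b) c = k * Q L f c"
  unfolding Q_def by (rule sum_distrib_left[symmetric])
lemma Q_sum: "Q L (\<lambda>b. \<Sum>i\<in>I. f i b) c = (\<Sum>i\<in>I. Q L (f i) c)"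
  unfolding Q_def by (rule sum.swap)

context
  fixes e :: nat and M :: "int list"
  assumes e: "e > 0" and Ml: "length M = e" and Mp: "\<forall>x\<in>set M. x \<ge> 0"
begin

lemma str_cfg:
  assumes p: "is_partition (fst c)" and L: "{a. a < L} \<subseteq> bs c"
  shows "is_partition (fst (Str e c M))" "{a. a < L} \<subseteq> bs (Str e c M)"
    "snd (Str e c M) = snd c + int (card (Zs e M L))"
    "Q L h (Str e c M) = Q L (\<lambda>b. h (phi e M b)) c + (\<Sum>b\<in>Zs e M L. h (phi e M b))"
proof -
  have S: "is_partition (fst (Str e c M))" "bs (Str e c M) = phi e M ` bs c"
    using Str_prop[OF e Ml Mp p] by auto
  show "is_partition (fst (Str e c M))" by (rule S(1))
  show L': "{a. a < L} \<subseteq> bs (Str e c M)" unfolding S(2) by (rule low_phi[OF e Ml Mp L])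
  have fin: "finite (bs c \<inter> {L..})" by (rule cfg(1)[OF p L])
  have "snd (Str e c M) = L + int (card (bs (Str e c M) \<inter> {L..}))" by (rule cfg(2)[OF S(1) L'])
  also have "\<dots> = L + int (card (bs c \<inter> {L..})) + int (card (Zs e M L))"
    unfolding S(2) card_phi[OF e Ml Mp L fin] by simp
  also have "L + int (card (bs c \<inter> {L..})) = snd c" using cfg(2)[OF p L] by simp
  finally show "snd (Str e c M) = snd c + int (card (Zs e M L))" .
  show "Q L h (Str e c M) = Q L (\<lambda>b. h (phi e M b)) c + (\<Sum>b\<in>Zs e M L. h (phi e M b))"
    unfolding Q_def S(2) by (rule sum_phi[OF e Ml Mp L fin])
qed

definition W :: "int \<Rightarrow> config \<Rightarrow> int" where
  "W L c = Q L (\<lambda>b. M ! nat (b mod int e)) c"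

lemma W_eq: "W L c = (\<Sum>i<e. M ! i * (Q L (F e (int i)) c - Q L (F e (int i + 1)) c))"
proof -
  have "W L c = Q L (\<lambda>b. \<Sum>i<e. M ! i * (F e (int i) b - F e (int i + 1) b)) c"
    unfolding W_def using Msel[OF e Ml Mp] by simp
  also have "\<dots> = (\<Sum>i<e. Q L (\<lambda>b. M ! i * (F e (int i) b - F e (int i + 1) b)) c)" by (rule Q_sum)
  also have "\<dots> = (\<Sum>i<e. M ! i * (Q L (F e (int i)) c - Q L (F e (int i + 1)) c))"
    by (simp add: Q_mult Q_diff)
  finally show ?thesis .
qed

lemma Q_phi_id: "Q L (\<lambda>b. id (phi e M b)) c = Q L id c + int e * W L c"
proof -
  have "Q L (\<lambda>b. id (phi e M b)) c = Q L (\<lambda>b. id b + int e * M ! nat (b mod int e)) c"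
    unfolding phi_def by simp
  then show ?thesis unfolding W_def by (simp add: Q_add Q_mult id_def)
qed

lemma Q_phi_F: "Q L (\<lambda>b. F e j (phi e M b)) c = Q L (F e j) c + W L c"
  unfolding W_def F_phi[OF e Ml Mp] by (rule Q_add)

lemma Q_Fe: "Q L (F e (int e)) c = Q L (F e 0) c - int (card (bs c \<inter> {L..}))"
proof -
  have "Q L (F e (int e)) c = Q L (\<lambda>b. F e 0 b - 1) c" unfolding Q_def using F_e[OF e Ml Mp] by simp
  also have "\<dots> = Q L (F e 0) c - int (card (bs c \<inter> {L..}))" unfolding Q_diff by (simp add: Q_def)
  finally show ?thesis .
qed

end

lemma exists_L: "\<forall>c\<in>set xs. is_partition (fst c) \<Longrightarrow> \<exists>L. \<forall>c\<in>set xs. {a. a < L} \<subseteq> bs c"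
proof (induction xs)
  case Nil then show ?case by simp
next
  case (Cons c xs)
  then obtain L where L: "\<forall>c\<in>set xs. {a. a < L} \<subseteq> bs c" by auto
  have p: "is_partition (fst c)" using Cons.prems by simp
  obtain n where n: "\<forall>i\<ge>n. fst c i = 0" using part_zero[OF p] by blast
  have Lc: "{a. a < snd c - int n} \<subseteq> bs c" unfolding bs_range using below_in[OF n] by auto
  define L' where "L' = min L (snd c - int n)"
  have "\<forall>c'\<in>set (c # xs). {a. a < L'} \<subseteq> bs c'"
    using L Lc unfolding L'_def by fastforce
  then show ?case by blast
qed

lemma BE:
  fixes e r :: nat and xs ys :: "config list" and L :: int
  assumes e: "e > 0" and lx: "length xs = r" and ly: "length ys = r"
    and mx: "is_multiconfig xs" and my: "is_multiconfig ys"
    and Lx: "\<forall>k<r. {a. a < L} \<subseteq> bs (xs ! k)" and Ly: "\<forall>k<r. {a. a < L} \<subseteq> bs (ys ! k)"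
  shows "block_equiv e xs ys \<longleftrightarrow> (\<forall>k<r. snd (xs ! k) = snd (ys ! k))
     \<and> (\<Sum>k<r. Q L id (xs ! k)) = (\<Sum>k<r. Q L id (ys ! k))
     \<and> (\<forall>j<e. (\<Sum>k<r. Q L (F e (int j)) (xs ! k)) = (\<Sum>k<r. Q L (F e (int j)) (ys ! k)))"
proof -
  have px: "is_partition (fst (xs ! k))" if "k < r" for k
    using mx that lx unfolding is_multiconfig_def by auto
  have py: "is_partition (fst (ys ! k))" if "k < r" for k
    using my that ly unfolding is_multiconfig_def by auto
  have pxA: "\<forall>k<r. is_partition (fst (xs ! k))" using px by auto
  have pyA: "\<forall>k<r. is_partition (fst (ys ! k))" using py by auto
  have snd_iff: "map snd xs = map snd ys \<longleftrightarrow> (\<forall>k<r. snd (xs ! k) = snd (ys ! k))"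
    using lx ly by (simp add: list_eq_iff_nth_eq)
  show ?thesis
  proof (cases "\<forall>k<r. snd (xs ! k) = snd (ys ! k)")
    case False
    then show ?thesis unfolding block_equiv_def snd_iff by blast
  next
    case SE: True
    have sz: "int (multi_size zs) = (\<Sum>k<r. Q L id (zs ! k)) - (\<Sum>k<r. \<Sum>a\<in>{L..<snd (zs ! k)}. a)"
      if "length zs = r" "\<forall>k<r. is_partition (fst (zs ! k))" "\<forall>k<r. {a. a < L} \<subseteq> bs (zs ! k)" for zs
    proof -
      have "int (multi_size zs) = (\<Sum>k<r. int (part_size (fst (zs ! k))))"
        unfolding multi_size_sum that(1) by simp
      also have "\<dots> = (\<Sum>k<r. Q L id (zs ! k) - (\<Sum>a\<in>{L..<snd (zs ! k)}. a))"
        by (rule sum.cong[OF refl]) (use that cfg(3) in auto)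
      finally show ?thesis by (simp add: sum_subtractf)
    qed
    have D: "(\<Sum>k<r. \<Sum>a\<in>{L..<snd (xs ! k)}. a) = (\<Sum>k<r. \<Sum>a\<in>{L..<snd (ys ! k)}. a)"
      using SE by simp
    have size_iff: "multi_size xs = multi_size ys \<longleftrightarrow> (\<Sum>k<r. Q L id (xs ! k)) = (\<Sum>k<r. Q L id (ys ! k))"
    proof -
      have "multi_size xs = multi_size ys \<longleftrightarrow> int (multi_size xs) = int (multi_size ys)" by simp
      also have "\<dots> \<longleftrightarrow> (\<Sum>k<r. Q L id (xs ! k)) = (\<Sum>k<r. Q L id (ys ! k))"
        unfolding sz[OF lx pxA Lx] sz[OF ly pyA Ly] D by simp
      finally show ?thesis .
    qed
    have rcs: "int (\<Sum>k<r. rc e (zs ! k) j) = (\<Sum>k<r. Q L (F e j) (zs ! k)) - (\<Sum>k<r. \<Sum>a\<in>{L..<snd (zs ! k)}. F e j a)"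
      if j: "0 \<le> j" "j < int e" and "length zs = r" "\<forall>k<r. is_partition (fst (zs ! k))" "\<forall>k<r. {a. a < L} \<subseteq> bs (zs ! k)" for zs j
    proof -
      have "int (\<Sum>k<r. rc e (zs ! k) j) = (\<Sum>k<r. int (rc e (zs ! k) j))" by simp
      also have "\<dots> = (\<Sum>k<r. Q L (F e j) (zs ! k) - (\<Sum>a\<in>{L..<snd (zs ! k)}. F e j a))"
        by (rule sum.cong[OF refl]) (use that cfg_rc[OF e j] in auto)
      finally show ?thesis by (simp add: sum_subtractf)
    qed
    have res_iff: "residue_mset e xs = residue_mset e ys \<longleftrightarrow>
        (\<forall>j<e. (\<Sum>k<r. Q L (F e (int j)) (xs ! k)) = (\<Sum>k<r. Q L (F e (int j)) (ys ! k)))"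
    proof -
      have cnt: "count (residue_mset e zs) j = (\<Sum>k<r. rc e (zs ! k) j)" if "is_multiconfig zs" "length zs = r" for zs j
        using count_res_mset[OF that(1)] that(2) by simp
      have one: "(\<Sum>k<r. rc e (xs ! k) j) = (\<Sum>k<r. rc e (ys ! k) j) \<longleftrightarrow>
           (\<Sum>k<r. Q L (F e j) (xs ! k)) = (\<Sum>k<r. Q L (F e j) (ys ! k))" if j: "0 \<le> j" "j < int e" for j
      proof -
        have D': "(\<Sum>k<r. \<Sum>a\<in>{L..<snd (xs ! k)}. F e j a) = (\<Sum>k<r. \<Sum>a\<in>{L..<snd (ys ! k)}. F e j a)"
          using SE by simp
        have "(\<Sum>k<r. rc e (xs ! k) j) = (\<Sum>k<r. rc e (ys ! k) j) \<longleftrightarrow>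
              int (\<Sum>k<r. rc e (xs ! k) j) = int (\<Sum>k<r. rc e (ys ! k) j)" by (simp only: of_nat_eq_iff)
        also have "\<dots> \<longleftrightarrow> (\<Sum>k<r. Q L (F e j) (xs ! k)) = (\<Sum>k<r. Q L (F e j) (ys ! k))"
          unfolding rcs[OF j lx pxA Lx] rcs[OF j ly pyA Ly] D' by simp
        finally show ?thesis .
      qed
      have "residue_mset e xs = residue_mset e ys \<longleftrightarrow> (\<forall>j. (\<Sum>k<r. rc e (xs ! k) j) = (\<Sum>k<r. rc e (ys ! k) j))"
        unfolding multiset_eq_iff cnt[OF mx lx] cnt[OF my ly] ..
      also have "\<dots> \<longleftrightarrow> (\<forall>j<e. (\<Sum>k<r. Q L (F e (int j)) (xs ! k)) = (\<Sum>k<r. Q L (F e (int j)) (ys ! k)))"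
      proof
        assume A: "\<forall>j. (\<Sum>k<r. rc e (xs ! k) j) = (\<Sum>k<r. rc e (ys ! k) j)"
        show "\<forall>j<e. (\<Sum>k<r. Q L (F e (int j)) (xs ! k)) = (\<Sum>k<r. Q L (F e (int j)) (ys ! k))"
          using A one by auto
      next
        assume B: "\<forall>j<e. (\<Sum>k<r. Q L (F e (int j)) (xs ! k)) = (\<Sum>k<r. Q L (F e (int j)) (ys ! k))"
        show "\<forall>j. (\<Sum>k<r. rc e (xs ! k) j) = (\<Sum>k<r. rc e (ys ! k) j)"
        proof
          fix j :: int
          show "(\<Sum>k<r. rc e (xs ! k) j) = (\<Sum>k<r. rc e (ys ! k) j)"
          proof (cases "0 \<le> j \<and> j < int e")
            case True
            then have "nat j < e" "int (nat j) = j" by auto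
            then show ?thesis using B one[of j] True by metis
          next
            case False
            then show ?thesis using rc_out[OF e False] by simp
          qed
        qed
      qed
      finally show ?thesis .
    qed
    show ?thesis unfolding block_equiv_def snd_iff size_iff res_iff using SE by simp
  qed
qed

theorem lemma3p7:
  fixes e r :: nat and M :: "int list" and cs ds :: "config list"
  assumes "e \<ge> 2" and "r \<ge> 1"
    and "length M = e" and "\<forall>m\<in>set M. m \<ge> 0"
    and "is_multiconfig cs" and "length cs = r"
    and "is_multiconfig ds" and "length ds = r"
  shows "block_equiv e cs ds \<longleftrightarrow> block_equiv e (Str_multi e cs M) (Str_multi e ds M)"
proof -
  have e: "e > 0" using assms(1) by simp
  note Ml = assms(3) and Mp = assms(4)
  note mc = assms(5) and lc = assms(6) and md = assms(7) and ld = assms(8)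
  have pc: "\<forall>k<r. is_partition (fst (cs ! k))" using mc lc unfolding is_multiconfig_def by auto
  have pd: "\<forall>k<r. is_partition (fst (ds ! k))" using md ld unfolding is_multiconfig_def by auto
  have "\<forall>c\<in>set (cs @ ds). is_partition (fst c)" using mc md unfolding is_multiconfig_def by auto
  then obtain L where L: "\<forall>c\<in>set (cs @ ds). {a. a < L} \<subseteq> bs c" using exists_L by blast
  have Lc: "\<forall>k<r. {a. a < L} \<subseteq> bs (cs ! k)" using L lc by auto
  have Ld: "\<forall>k<r. {a. a < L} \<subseteq> bs (ds ! k)" using L ld by auto
  define cs' where "cs' = Str_multi e cs M"
  define ds' where "ds' = Str_multi e ds M"
  have lc': "length cs' = r" and ld': "length ds' = r" unfolding cs'_def ds'_def Str_multi_def using lc ld by auto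
  have nc': "cs' ! k = Str e (cs ! k) M" if "k < r" for k unfolding cs'_def Str_multi_def using that lc by simp
  have nd': "ds' ! k = Str e (ds ! k) M" if "k < r" for k unfolding ds'_def Str_multi_def using that ld by simp
  have mc': "is_multiconfig cs'"
    unfolding cs'_def Str_multi_def using Str_prop[OF e Ml Mp] mc
    unfolding is_multiconfig_def by auto
  have md': "is_multiconfig ds'"
    unfolding ds'_def Str_multi_def using Str_prop[OF e Ml Mp] md
    unfolding is_multiconfig_def by auto
  have Lc': "\<forall>k<r. {a. a < L} \<subseteq> bs (cs' ! k)" using nc' str_cfg(2)[OF e Ml Mp] pc Lc by auto
  have Ld': "\<forall>k<r. {a. a < L} \<subseteq> bs (ds' ! k)" using nd' str_cfg(2)[OF e Ml Mp] pd Ld by auto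
  note BE1 = BE[OF e lc ld mc md Lc Ld]
  note BE2 = BE[OF e lc' ld' mc' md' Lc' Ld']

  define z where "z = int (card (Zs e M L))"
  define z0 where "z0 = (\<Sum>b\<in>Zs e M L. id (phi e M b))"
  define zf where "zf j = (\<Sum>b\<in>Zs e M L. F e j (phi e M b))" for j
  define QI where "QI xs = (\<Sum>k<r. Q L id (xs ! k))" for xs
  define QF where "QF xs j = (\<Sum>k<r. Q L (F e j) (xs ! k))" for xs j
  define WS where "WS xs = (\<Sum>k<r. W e M L (xs ! k))" for xs
  define C where "C xs = (\<Sum>k<r. int (card (bs (xs ! k) \<inter> {L..})))" for xs

  have gen: "(\<forall>k<r. snd (xs' ! k) = snd (xs ! k) + z) \<and> QI xs' = QI xs + int e * WS xs + int r * z0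
      \<and> (\<forall>j. QF xs' j = QF xs j + WS xs + int r * zf j)
      \<and> WS xs = (\<Sum>i<e. M ! i * (QF xs (int i) - QF xs (int i + 1)))
      \<and> QF xs (int e) = QF xs 0 - C xs \<and> C xs = (\<Sum>k<r. snd (xs ! k) - L)"
    if px: "\<forall>k<r. is_partition (fst (xs ! k))" and Lx: "\<forall>k<r. {a. a < L} \<subseteq> bs (xs ! k)"
      and nx: "\<forall>k<r. xs' ! k = Str e (xs ! k) M" for xs xs'
  proof (intro conjI)
    show "\<forall>k<r. snd (xs' ! k) = snd (xs ! k) + z"
      using str_cfg(3)[OF e Ml Mp] px Lx nx unfolding z_def by auto
    have "QI xs' = (\<Sum>k<r. Q L id (xs ! k) + int e * W e M L (xs ! k) + z0)"
      unfolding QI_def z0_def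
      by (rule sum.cong[OF refl]) (use nx px Lx str_cfg(4)[OF e Ml Mp] Q_phi_id[OF e Ml Mp] in auto)
    then show "QI xs' = QI xs + int e * WS xs + int r * z0"
      unfolding QI_def WS_def by (simp add: sum.distrib sum_distrib_left)
    show "\<forall>j. QF xs' j = QF xs j + WS xs + int r * zf j"
    proof
      fix j
      have "QF xs' j = (\<Sum>k<r. Q L (F e j) (xs ! k) + W e M L (xs ! k) + zf j)"
        unfolding QF_def zf_def
        by (rule sum.cong[OF refl]) (use nx px Lx str_cfg(4)[OF e Ml Mp] Q_phi_F[OF e Ml Mp] in auto)
      then show "QF xs' j = QF xs j + WS xs + int r * zf j"
        unfolding QF_def WS_def by (simp add: sum.distrib)
    qed
    have "WS xs = (\<Sum>k<r. \<Sum>i<e. M ! i * (Q L (F e (int i)) (xs ! k) - Q L (F e (int i + 1)) (xs ! k)))"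
      unfolding WS_def using W_eq[OF e Ml Mp] by simp
    also have "\<dots> = (\<Sum>i<e. \<Sum>k<r. M ! i * (Q L (F e (int i)) (xs ! k) - Q L (F e (int i + 1)) (xs ! k)))"
      by (rule sum.swap)
    also have "\<dots> = (\<Sum>i<e. M ! i * (QF xs (int i) - QF xs (int i + 1)))"
      unfolding QF_def
      by (rule sum.cong[OF refl]) (simp only: sum_distrib_left sum_subtractf[symmetric])
    finally show "WS xs = (\<Sum>i<e. M ! i * (QF xs (int i) - QF xs (int i + 1)))" .
    have "QF xs (int e) = (\<Sum>k<r. Q L (F e 0) (xs ! k) - int (card (bs (xs ! k) \<inter> {L..})))"
      unfolding QF_def using Q_Fe[OF e Ml Mp] by simp
    then show "QF xs (int e) = QF xs 0 - C xs" unfolding QF_def C_def by (simp add: sum_subtractf)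
    show "C xs = (\<Sum>k<r. snd (xs ! k) - L)"
      unfolding C_def
    proof (rule sum.cong[OF refl])
      fix k assume "k \<in> {..<r}"
      then have "snd (xs ! k) = L + int (card (bs (xs ! k) \<inter> {L..}))" using px Lx cfg(2) by auto
      then show "int (card (bs (xs ! k) \<inter> {L..})) = snd (xs ! k) - L" by simp
    qed
  qed
  have nc'': "\<forall>k<r. cs' ! k = Str e (cs ! k) M" using nc' by auto
  have nd'': "\<forall>k<r. ds' ! k = Str e (ds ! k) M" using nd' by auto
  note Gc = gen[OF pc Lc nc''] and Gd = gen[OF pd Ld nd'']
  have c_snd: "\<forall>k<r. snd (cs' ! k) = snd (cs ! k) + z" using Gc by blast
  have c_QI: "QI cs' = QI cs + int e * WS cs + int r * z0" using Gc by blast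
  have c_QF: "\<And>j. QF cs' j = QF cs j + WS cs + int r * zf j" using Gc by blast
  have c_WS: "WS cs = (\<Sum>i<e. M ! i * (QF cs (int i) - QF cs (int i + 1)))" using Gc by blast
  have c_Fe: "QF cs (int e) = QF cs 0 - C cs" using Gc by blast
  have c_C: "C cs = (\<Sum>k<r. snd (cs ! k) - L)" using Gc by blast
  have d_snd: "\<forall>k<r. snd (ds' ! k) = snd (ds ! k) + z" using Gd by blast
  have d_QI: "QI ds' = QI ds + int e * WS ds + int r * z0" using Gd by blast
  have d_QF: "\<And>j. QF ds' j = QF ds j + WS ds + int r * zf j" using Gd by blast
  have d_WS: "WS ds = (\<Sum>i<e. M ! i * (QF ds (int i) - QF ds (int i + 1)))" using Gd by blast
  have d_Fe: "QF ds (int e) = QF ds 0 - C ds" using Gd by blast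
  have d_C: "C ds = (\<Sum>k<r. snd (ds ! k) - L)" using Gd by blast

  have BE1': "block_equiv e cs ds \<longleftrightarrow> (\<forall>k<r. snd (cs ! k) = snd (ds ! k)) \<and> QI cs = QI ds
      \<and> (\<forall>j<e. QF cs (int j) = QF ds (int j))"
    using BE1 unfolding QI_def QF_def .
  have BE2': "block_equiv e cs' ds' \<longleftrightarrow> (\<forall>k<r. snd (cs' ! k) = snd (ds' ! k)) \<and> QI cs' = QI ds'
      \<and> (\<forall>j<e. QF cs' (int j) = QF ds' (int j))"
    using BE2 unfolding QI_def QF_def .
  have snd_iff: "(\<forall>k<r. snd (cs' ! k) = snd (ds' ! k)) \<longleftrightarrow> (\<forall>k<r. snd (cs ! k) = snd (ds ! k))"
    using c_snd d_snd by auto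
  have Ceq: "C cs = C ds" if "\<forall>k<r. snd (cs ! k) = snd (ds ! k)"
    unfolding c_C d_C using that by simp

  show ?thesis
    unfolding cs'_def[symmetric] ds'_def[symmetric] BE1' BE2' snd_iff
  proof (intro iffI conjI)
    assume H: "(\<forall>k<r. snd (cs ! k) = snd (ds ! k)) \<and> QI cs = QI ds \<and> (\<forall>j<e. QF cs (int j) = QF ds (int j))"
    have S: "\<forall>k<r. snd (cs ! k) = snd (ds ! k)" and HI: "QI cs = QI ds"
      and HF: "\<forall>j<e. QF cs (int j) = QF ds (int j)" using H by auto
    show "\<forall>k<r. snd (cs ! k) = snd (ds ! k)" by (rule S)
    have QFe: "QF cs (int e) = QF ds (int e)" unfolding c_Fe d_Fe Ceq[OF S] using HF[rule_format, OF e] by simp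
    have QF1: "QF cs (int i + 1) = QF ds (int i + 1)" if "i < e" for i
    proof (cases "i + 1 < e")
      case True
      then have "QF cs (int (i + 1)) = QF ds (int (i + 1))" using HF by blast
      then show ?thesis by (simp add: add.commute)
    next
      case False then have "i + 1 = e" using that by simp
      then have "int i + 1 = int e" by simp
      then show ?thesis using QFe by simp
    qed
    have WSeq: "WS cs = WS ds"
      unfolding c_WS d_WS
    proof (rule sum.cong[OF refl])
      fix i assume "i \<in> {..<e}"
      then have "i < e" by simp
      then show "M ! i * (QF cs (int i) - QF cs (int i + 1)) = M ! i * (QF ds (int i) - QF ds (int i + 1))"
        using HF QF1 by simp
    qed
    show "QI cs' = QI ds'" unfolding c_QI d_QI HI WSeq ..
    show "\<forall>j<e. QF cs' (int j) = QF ds' (int j)" unfolding c_QF d_QF WSeq using HF by simp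
  next
    assume H: "(\<forall>k<r. snd (cs ! k) = snd (ds ! k)) \<and> QI cs' = QI ds' \<and> (\<forall>j<e. QF cs' (int j) = QF ds' (int j))"
    have S: "\<forall>k<r. snd (cs ! k) = snd (ds ! k)" and HI: "QI cs' = QI ds'"
      and HF: "\<forall>j<e. QF cs' (int j) = QF ds' (int j)" using H by auto
    show "\<forall>k<r. snd (cs ! k) = snd (ds ! k)" by (rule S)
    define d where "d = WS ds - WS cs"
    have dj: "QF cs (int j) - QF ds (int j) = d" if "j < e" for j
    proof -
      have "QF cs (int j) + WS cs + int r * zf (int j) = QF ds (int j) + WS ds + int r * zf (int j)"
        using HF that unfolding c_QF d_QF by blast
      then show ?thesis unfolding d_def by linarith
    qed
    have de: "QF cs (int e) - QF ds (int e) = d" unfolding c_Fe d_Fe Ceq[OF S] using dj[OF e] by simp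
    have di1: "QF cs (int i + 1) - QF ds (int i + 1) = d" if "i < e" for i
    proof (cases "i + 1 < e")
      case True
      then have "QF cs (int (i + 1)) - QF ds (int (i + 1)) = d" using dj by blast
      then show ?thesis by (simp add: add.commute)
    next
      case False then have "i + 1 = e" using that by simp
      then have "int i + 1 = int e" by simp
      then show ?thesis using de by simp
    qed
    have "WS cs - WS ds = (\<Sum>i<e. M ! i * (QF cs (int i) - QF cs (int i + 1)) - M ! i * (QF ds (int i) - QF ds (int i + 1)))"
      unfolding c_WS d_WS by (rule sum_subtractf[symmetric])
    also have "\<dots> = (\<Sum>i<e. M ! i * ((QF cs (int i) - QF ds (int i)) - (QF cs (int i + 1) - QF ds (int i + 1))))"
      by (rule sum.cong[OF refl]) (simp add: algebra_simps)
    also have "\<dots> = 0"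
    proof (rule sum.neutral, intro ballI)
      fix i assume "i \<in> {..<e}"
      then have "i < e" by simp
      then show "M ! i * ((QF cs (int i) - QF ds (int i)) - (QF cs (int i + 1) - QF ds (int i + 1))) = 0"
        using dj di1 by simp
    qed
    finally have d0: "d = 0" unfolding d_def by simp
    have "QI cs + int e * WS cs = QI ds + int e * WS ds" using HI unfolding c_QI d_QI by simp
    moreover have "WS cs = WS ds" using d0 unfolding d_def by simp
    ultimately show "QI cs = QI ds" by simp
    show "\<forall>j<e. QF cs (int j) = QF ds (int j)" using dj d0 by simp
  qed
qed

end
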